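(* The graph ${\rm SR}(m,n)$ is not determined by its spectrum (that is, there is a graph not isomorphic to ${\rm SR}(m,n)$ whose adjacency matrix has the same spectrum) when (a) $m=4$ and $n\ge 3$, or (b) $n=3$ and $m\ge 4$.
   Context: ${\rm SR}(m,n)$ is the graph whose vertices are the vectors in $\{0,1,2,\dots\}^m$ with coordinate sum $n$, two vertices being adjacent when they differ in precisely two coordinate positions. *)

theory Defs
  imports "Jordan_Normal_Form.Char_Poly" "HOL-Library.List_Lexorder"
begin

definition simple_graph :: "'a set \<Rightarrow> ('a \<Rightarrow> 'a \<Rightarrow> bool) \<Rightarrow> bool" where
  "simple_graph V E \<longleftrightarrow> finite V \<and> (\<forall>x y. E x y \<longrightarrow> x \<in> V \<and> y \<in> V)
     \<and> (\<forall>x y. E x y \<longrightarrow> E y x) \<and> (\<forall>x. \<not> E x x)"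

definition adj_matrix :: "'a::linorder set \<Rightarrow> ('a \<Rightarrow> 'a \<Rightarrow> bool) \<Rightarrow> real mat" where
  "adj_matrix V E = (let vs = sorted_list_of_set V in
     mat (length vs) (length vs) (\<lambda>(i,j). if E (vs ! i) (vs ! j) then 1 else 0))"

text \<open>Same spectrum (eigenvalues with multiplicities) = same characteristic polynomial.\<close>
definition cospectral :: "'a::linorder set \<Rightarrow> ('a \<Rightarrow> 'a \<Rightarrow> bool) \<Rightarrow>
    'b::linorder set \<Rightarrow> ('b \<Rightarrow> 'b \<Rightarrow> bool) \<Rightarrow> bool" where
  "cospectral V E W F \<longleftrightarrow> char_poly (adj_matrix V E) = char_poly (adj_matrix W F)"

definition graph_iso :: "'a set \<Rightarrow> ('a \<Rightarrow> 'a \<Rightarrow> bool) \<Rightarrow>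
    'b set \<Rightarrow> ('b \<Rightarrow> 'b \<Rightarrow> bool) \<Rightarrow> bool" where
  "graph_iso V E W F \<longleftrightarrow> (\<exists>f. bij_betw f V W \<and> (\<forall>x\<in>V. \<forall>y\<in>V. E x y \<longleftrightarrow> F (f x) (f y)))"

text \<open>Determined by spectrum: every cospectral finite simple graph is isomorphic.
  Every finite graph is isomorphic to one on a subset of nat, so quantifying over such graphs suffices.\<close>
definition DS :: "'a::linorder set \<Rightarrow> ('a \<Rightarrow> 'a \<Rightarrow> bool) \<Rightarrow> bool" where
  "DS V E \<longleftrightarrow> (\<forall>(W::nat set) F. simple_graph W F \<and> cospectral V E W F \<longrightarrow> graph_iso V E W F)"

text \<open>SR(m,n): vectors in {0,1,2,...}^m (lists of length m) with coordinate sum n,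
  adjacent iff they differ in precisely two coordinates.\<close>
definition SR_verts :: "nat \<Rightarrow> nat \<Rightarrow> nat list set" where
  "SR_verts m n = {xs. length xs = m \<and> sum_list xs = n}"

definition SR_adj :: "nat \<Rightarrow> nat \<Rightarrow> nat list \<Rightarrow> nat list \<Rightarrow> bool" where
  "SR_adj m n xs ys \<longleftrightarrow> xs \<in> SR_verts m n \<and> ys \<in> SR_verts m n
     \<and> card {i. i < m \<and> xs ! i \<noteq> ys ! i} = 2"

end

theory Submission
  imports Defs
begin



lemma sum_left_Q:
  fixes f :: "nat \<Rightarrow> real"
  assumes KN: "K \<subseteq> {..<N}" and i: "i < N"
  shows "(\<Sum>k\<in>{0..<N}. (if i \<in> K \<and> k \<in> K then 1/2 - (if i = k then 1 else 0) else (if i = k then 1 else 0)) * f k)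
        = (if i \<in> K then (1/2) * (\<Sum>k\<in>K. f k) - f i else f i)"
proof (cases "i \<in> K")
  case True
  have "(\<Sum>k\<in>{0..<N}. (if i \<in> K \<and> k \<in> K then 1/2 - (if i = k then 1 else 0) else (if i = k then 1 else 0)) * f k)
      = (\<Sum>k\<in>{0..<N}. (if k \<in> K then (1/2) * f k else 0) - (if i = k then f k else 0))"
    using True by (intro sum.cong) (auto simp: algebra_simps)
  also have "\<dots> = (\<Sum>k\<in>{0..<N}. (if k \<in> K then (1/2) * f k else 0)) - f i"
    using i by (simp add: sum_subtractf)
  also have "(\<Sum>k\<in>{0..<N}. (if k \<in> K then (1/2) * f k else 0)) = (\<Sum>k\<in>K. (1/2) * f k)"
  proof -
    have "{0..<N} \<inter> K = K" "K \<inter> {0..<N} = K" using KN by auto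
    then show ?thesis by (simp add: sum.If_cases)
  qed
  finally show ?thesis using True by (simp add: sum_distrib_left)
next
  case False
  have "(\<Sum>k\<in>{0..<N}. (if i \<in> K \<and> k \<in> K then 1/2 - (if i = k then 1 else 0) else (if i = k then 1 else 0)) * f k)
      = (\<Sum>k\<in>{0..<N}. if i = k then f k else 0)"
    using False by (intro sum.cong) auto
  then show ?thesis using i False by simp
qed

lemma sum_right_Q:
  fixes f :: "nat \<Rightarrow> real"
  assumes KN: "K \<subseteq> {..<N}" and j: "j < N"
  shows "(\<Sum>k\<in>{0..<N}. f k * (if k \<in> K \<and> j \<in> K then 1/2 - (if k = j then 1 else 0) else (if k = j then 1 else 0)))
        = (if j \<in> K then (1/2) * (\<Sum>k\<in>K. f k) - f j else f j)"
proof -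
  have "(\<Sum>k\<in>{0..<N}. f k * (if k \<in> K \<and> j \<in> K then 1/2 - (if k = j then 1 else 0) else (if k = j then 1 else 0)))
    = (\<Sum>k\<in>{0..<N}. (if j \<in> K \<and> k \<in> K then 1/2 - (if j = k then 1 else 0) else (if j = k then 1 else 0)) * f k)"
    by (intro sum.cong) auto
  then show ?thesis using sum_left_Q[OF KN j, of f] by simp
qed

lemma sum01_zero:
  fixes g :: "nat \<Rightarrow> real"
  assumes "finite K" "\<forall>l\<in>K. g l = 0 \<or> g l = 1" "(\<Sum>l\<in>K. g l) = 0" "l \<in> K"
  shows "g l = 0"
proof -
  have "\<forall>l\<in>K. g l = 0" using assms(1-3) by (subst sum_nonneg_eq_0_iff[symmetric]) (auto intro: assms)
  then show ?thesis using assms(4) by auto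
qed

lemma sum01_full:
  fixes g :: "nat \<Rightarrow> real"
  assumes "finite K" "\<forall>l\<in>K. g l = 0 \<or> g l = 1" "(\<Sum>l\<in>K. g l) = real (card K)" "l \<in> K"
  shows "g l = 1"
proof -
  have "(\<Sum>l\<in>K. 1 - g l) = 0" using assms(3) by (simp add: sum_subtractf)
  then have "1 - g l = 0" using assms(1,2,4) by (intro sum01_zero[where K=K and g="\<lambda>l. 1 - g l"]) auto
  then show ?thesis by simp
qed

definition Qm :: "nat \<Rightarrow> nat set \<Rightarrow> real mat" where
  "Qm N K = mat N N (\<lambda>(i,j). if i \<in> K \<and> j \<in> K then 1/2 - (if i = j then 1 else 0) else (if i = j then 1 else 0))"

lemma Qm_idx: "k < N \<Longrightarrow> j < N \<Longrightarrow> Qm N K $$ (k,j) =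
  (if k \<in> K \<and> j \<in> K then 1/2 - (if k = j then 1 else 0) else (if k = j then 1 else 0))"
  by (simp add: Qm_def)

lemma Qm_sq:
  assumes KN: "K \<subseteq> {..<N}" and cK: "card K = 4"
  shows "Qm N K * Qm N K = 1\<^sub>m N"
proof (rule eq_matI)
  fix i j assume i: "i < dim_row (1\<^sub>m N :: real mat)" and j: "j < dim_col (1\<^sub>m N :: real mat)"
  then have i: "i < N" and j: "j < N" by auto
  have fK: "finite K" using KN finite_subset by blast
  have "(Qm N K * Qm N K) $$ (i,j) = (\<Sum>k\<in>{0..<N}. (if i \<in> K \<and> k \<in> K then 1/2 - (if i = k then 1 else 0) else (if i = k then 1 else 0)) *
       (if k \<in> K \<and> j \<in> K then 1/2 - (if k = j then 1 else 0) else (if k = j then 1 else 0)))"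
    using i j unfolding Qm_def by (simp add: scalar_prod_def)
  also have "\<dots> = (if i \<in> K then (1/2) * (\<Sum>k\<in>K. (if k \<in> K \<and> j \<in> K then 1/2 - (if k = j then 1 else 0) else (if k = j then 1 else 0)))
        - (if i \<in> K \<and> j \<in> K then 1/2 - (if i = j then 1 else 0) else (if i = j then 1 else 0))
      else (if i \<in> K \<and> j \<in> K then 1/2 - (if i = j then 1 else 0) else (if i = j then 1 else 0)))"
    by (rule sum_left_Q[OF KN i])
  also have "\<dots> = (1\<^sub>m N :: real mat) $$ (i,j)"
  proof (cases "i \<in> K")
    case iK: True
    show ?thesis
    proof (cases "j \<in> K")
      case jK: True
      have "(\<Sum>k\<in>K. (if k \<in> K \<and> j \<in> K then 1/2 - (if k = j then 1 else 0) else (if k = j then 1 else 0)))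
          = (\<Sum>k\<in>K. (1/2::real) - (if k = j then 1 else 0))" using jK by (intro sum.cong) auto
      also have "\<dots> = 1" using jK fK cK by (simp add: sum_subtractf)
      finally show ?thesis using iK jK i j by simp
    next
      case jK: False
      have "(\<Sum>k\<in>K. (if k \<in> K \<and> j \<in> K then 1/2 - (if k = j then 1 else 0) else (if k = j then 1 else 0))) = 0"
        using jK by (intro sum.neutral) auto
      then show ?thesis using iK jK i j by auto
    qed
  next
    case False
    then show ?thesis using i j by auto
  qed
  finally show "(Qm N K * Qm N K) $$ (i,j) = (1\<^sub>m N :: real mat) $$ (i,j)" .
next
  show "dim_row (Qm N K * Qm N K) = dim_row (1\<^sub>m N :: real mat)" by (simp add: Qm_def)
  show "dim_col (Qm N K * Qm N K) = dim_col (1\<^sub>m N :: real mat)" by (simp add: Qm_def)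
qed

lemma Qm_conj:
  fixes a :: "nat \<Rightarrow> nat \<Rightarrow> real"
  assumes KN: "K \<subseteq> {..<N}" and cK: "card K = 4"
    and a01: "\<And>i j. a i j = 0 \<or> a i j = 1"
    and sym: "\<And>i j. a i j = a j i"
    and reg: "\<And>k. k \<in> K \<Longrightarrow> (\<Sum>l\<in>K. a k l) = r"
    and out: "\<And>k. k < N \<Longrightarrow> k \<notin> K \<Longrightarrow> (\<Sum>l\<in>K. a k l) = 0 \<or> (\<Sum>l\<in>K. a k l) = 2 \<or> (\<Sum>l\<in>K. a k l) = 4"
  shows "Qm N K * mat N N (\<lambda>(i,j). a i j) * Qm N K =
    mat N N (\<lambda>(i,j). if (i \<in> K \<and> j \<notin> K \<and> (\<Sum>l\<in>K. a j l) = 2) \<or> (j \<in> K \<and> i \<notin> K \<and> (\<Sum>l\<in>K. a i l) = 2)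
        then 1 - a i j else a i j)" (is "_ = mat N N ?b")
proof (rule eq_matI)
  fix i j assume "i < dim_row (mat N N ?b)" "j < dim_col (mat N N ?b)"
  then have i: "i < N" and j: "j < N" by auto
  have fK: "finite K" using KN finite_subset by blast
  define d where "d k = (\<Sum>l\<in>K. a k l)" for k
  have dsym: "(\<Sum>l\<in>K. a l k) = d k" for k unfolding d_def by (intro sum.cong) (auto simp: sym)
  define qa where "qa k = (if i \<in> K then (1/2) * (\<Sum>l\<in>K. a l k) - a i k else a i k)" for k
  have QA: "(Qm N K * mat N N (\<lambda>(i,j). a i j)) $$ (i,k) = qa k" if k: "k < N" for k
  proof -
    have "(Qm N K * mat N N (\<lambda>(i,j). a i j)) $$ (i,k) = (\<Sum>l\<in>{0..<N}. (if i \<in> K \<and> l \<in> K then 1/2 - (if i = l then 1 else 0) else (if i = l then 1 else 0)) * a l k)"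
      using i k unfolding Qm_def by (simp add: scalar_prod_def)
    also have "\<dots> = qa k" unfolding qa_def by (rule sum_left_Q[OF KN i])
    finally show ?thesis .
  qed
  have "(Qm N K * mat N N (\<lambda>(i,j). a i j) * Qm N K) $$ (i,j) =
      (\<Sum>k\<in>{0..<N}. qa k * (if k \<in> K \<and> j \<in> K then 1/2 - (if k = j then 1 else 0) else (if k = j then 1 else 0)))"
  proof -
    have "(Qm N K * mat N N (\<lambda>(i,j). a i j) * Qm N K) $$ (i,j) =
      (\<Sum>k\<in>{0..<N}. (Qm N K * mat N N (\<lambda>(i,j). a i j)) $$ (i,k) * Qm N K $$ (k,j))"
      using i j by (simp add: scalar_prod_def Qm_def)
    also have "\<dots> = (\<Sum>k\<in>{0..<N}. qa k * (if k \<in> K \<and> j \<in> K then 1/2 - (if k = j then 1 else 0) else (if k = j then 1 else 0)))"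
      using j by (intro sum.cong) (simp_all add: QA Qm_idx)
    finally show ?thesis .
  qed
  also have "\<dots> = (if j \<in> K then (1/2) * (\<Sum>k\<in>K. qa k) - qa j else qa j)"
    by (rule sum_right_Q[OF KN j])
  also have "\<dots> = ?b (i,j)"
  proof -
    have a01': "\<forall>l\<in>K. a x l = 0 \<or> a x l = 1" for x using a01 by auto
    have d0: "a x l = 0" if "d x = 0" "l \<in> K" for x l
      using sum01_zero[OF fK a01'] that unfolding d_def by blast
    have d4: "a x l = 1" if "d x = 4" "l \<in> K" for x l
      using sum01_full[OF fK a01'] that cK unfolding d_def by auto
    show ?thesis
    proof (cases "i \<in> K")
      case iK: True
      show ?thesis
      proof (cases "j \<in> K")
        case jK: True
        have "(\<Sum>k\<in>K. qa k) = (\<Sum>k\<in>K. (1/2) * d k - a i k)"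
          unfolding qa_def using iK dsym by simp
        also have "\<dots> = (1/2) * (\<Sum>k\<in>K. d k) - d i"
          by (simp add: sum_subtractf sum_distrib_left d_def)
        also have "(\<Sum>k\<in>K. d k) = 4 * r" using reg cK by (simp add: d_def)
        also have "d i = r" using reg iK d_def by simp
        finally have "(\<Sum>k\<in>K. qa k) = r" by simp
        moreover have "d j = r" using reg jK d_def by simp
        ultimately show ?thesis using iK jK unfolding qa_def by (simp add: dsym)
      next
        case jK: False
        have "d j = 0 \<or> d j = 2 \<or> d j = 4" using out[OF j jK] d_def by simp
        moreover have "a i j = a j i" by (rule sym)
        ultimately show ?thesis using iK jK d0[of j i] d4[of j i] unfolding qa_def
          by (auto simp: dsym d_def[symmetric])
      qed
    next
      case iK: False
      show ?thesis
      proof (cases "j \<in> K")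
        case jK: True
        have "(\<Sum>k\<in>K. qa k) = d i" unfolding qa_def d_def using iK by simp
        moreover have "d i = 0 \<or> d i = 2 \<or> d i = 4" using out[OF i iK] d_def by simp
        ultimately show ?thesis using iK jK d0[of i j] d4[of i j] unfolding qa_def
          by (auto simp: d_def[symmetric])
      next
        case jK: False
        then show ?thesis using iK unfolding qa_def by auto
      qed
    qed
  qed
  finally show "(Qm N K * mat N N (\<lambda>(i,j). a i j) * Qm N K) $$ (i,j) = mat N N ?b $$ (i,j)" using i j by simp
next
  show "dim_row (Qm N K * mat N N (\<lambda>(i,j). a i j) * Qm N K) = dim_row (mat N N ?b)" by (simp add: Qm_def)
  show "dim_col (Qm N K * mat N N (\<lambda>(i,j). a i j) * Qm N K) = dim_col (mat N N ?b)" by (simp add: Qm_def)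
qed

definition cnt :: "'a set \<Rightarrow> ('a \<Rightarrow> 'a \<Rightarrow> bool) \<Rightarrow> 'a \<Rightarrow> nat" where
  "cnt C E v = card {c\<in>C. E v c}"

definition swE :: "'a set \<Rightarrow> ('a \<Rightarrow> 'a \<Rightarrow> bool) \<Rightarrow> 'a \<Rightarrow> 'a \<Rightarrow> bool" where
  "swE C E u v = (if (u \<in> C \<and> v \<notin> C \<and> cnt C E v = 2) \<or> (v \<in> C \<and> u \<notin> C \<and> cnt C E u = 2) then \<not> E u v else E u v)"

lemma gm_graph:
  fixes V :: "'a::linorder set"
  assumes fV: "finite V" and CV: "C \<subseteq> V" and cC: "card C = 4"
    and sym: "\<And>x y. E x y \<Longrightarrow> E y x"
    and reg: "\<And>c. c \<in> C \<Longrightarrow> cnt C E c = r"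
    and out: "\<And>v. v \<in> V \<Longrightarrow> v \<notin> C \<Longrightarrow> cnt C E v = 0 \<or> cnt C E v = 2 \<or> cnt C E v = 4"
  shows "char_poly (adj_matrix V E) = char_poly (adj_matrix V (swE C E))"
proof -
  define vs where "vs = sorted_list_of_set V"
  define N where "N = length vs"
  have dist: "distinct vs" and setvs: "set vs = V" using fV by (auto simp: vs_def)
  define a where "a i j = (if i < N \<and> j < N \<and> E (vs!i) (vs!j) then 1 else (0::real))" for i j
  define K where "K = {k. k < N \<and> vs!k \<in> C}"
  have KN: "K \<subseteq> {..<N}" by (auto simp: K_def)
  have bij: "bij_betw (nth vs) K C"
  proof (rule bij_betw_imageI)
    show "inj_on (nth vs) K" using dist by (auto simp: K_def inj_on_def nth_eq_iff_index_eq N_def)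
    show "nth vs ` K = C"
    proof
      show "nth vs ` K \<subseteq> C" by (auto simp: K_def)
      show "C \<subseteq> nth vs ` K"
      proof
        fix c assume c: "c \<in> C"
        then have "c \<in> set vs" using CV setvs by auto
        then obtain k where "k < N" "vs!k = c" by (auto simp: in_set_conv_nth N_def)
        then show "c \<in> nth vs ` K" using c by (auto simp: K_def)
      qed
    qed
  qed
  have cK: "card K = 4" using bij_betw_same_card[OF bij] cC by simp
  have dsum: "(\<Sum>l\<in>K. a k l) = real (cnt C E (vs!k))" if k: "k < N" for k
  proof -
    have "(\<Sum>l\<in>K. a k l) = (\<Sum>l\<in>K. (\<lambda>c. if E (vs!k) c then 1 else (0::real)) (vs!l))"
      using k by (intro sum.cong) (auto simp: a_def K_def)
    also have "\<dots> = (\<Sum>c\<in>C. if E (vs!k) c then 1 else (0::real))"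
      using sum.reindex_bij_betw[OF bij, of "\<lambda>c. if E (vs!k) c then 1 else (0::real)"] by simp
    also have "\<dots> = real (card {c\<in>C. E (vs!k) c})"
      using finite_subset[OF CV fV] by (simp add: sum.If_cases Int_def conj_commute)
    finally show ?thesis by (simp add: cnt_def)
  qed
  have a01: "a i j = 0 \<or> a i j = 1" for i j by (simp add: a_def)
  have asym: "a i j = a j i" for i j using sym by (auto simp: a_def)
  have areg: "(\<Sum>l\<in>K. a k l) = real r" if "k \<in> K" for k
    using that dsum reg by (auto simp: K_def)
  have aout: "(\<Sum>l\<in>K. a k l) = 0 \<or> (\<Sum>l\<in>K. a k l) = 2 \<or> (\<Sum>l\<in>K. a k l) = 4"
    if "k < N" "k \<notin> K" for k
  proof -
    have "vs!k \<in> V" "vs!k \<notin> C" using that setvs by (auto simp: K_def N_def)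
    then show ?thesis using out[of "vs!k"] dsum[OF that(1)] by auto
  qed
  note conj = Qm_conj[OF KN cK a01 asym areg aout]
  have A: "adj_matrix V E = mat N N (\<lambda>(i,j). a i j)"
    unfolding adj_matrix_def Let_def vs_def[symmetric] N_def[symmetric]
    by (rule cong_mat) (auto simp: a_def)
  have B: "adj_matrix V (swE C E) = mat N N (\<lambda>(i,j). if (i \<in> K \<and> j \<notin> K \<and> (\<Sum>l\<in>K. a j l) = 2) \<or> (j \<in> K \<and> i \<notin> K \<and> (\<Sum>l\<in>K. a i l) = 2)
        then 1 - a i j else a i j)"
    unfolding adj_matrix_def Let_def vs_def[symmetric] N_def[symmetric]
    apply (rule cong_mat)
      apply simp
     apply simp
    apply (simp add: dsum)
    apply (auto simp: a_def K_def swE_def)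
    done
  have sim: "similar_mat (adj_matrix V (swE C E)) (adj_matrix V E)"
  proof (rule similar_matI[where n=N and P="Qm N K" and Q="Qm N K"])
    show "{adj_matrix V (swE C E), adj_matrix V E, Qm N K, Qm N K} \<subseteq> carrier_mat N N"
      by (auto simp: A B Qm_def)
    show "Qm N K * Qm N K = 1\<^sub>m N" by (rule Qm_sq[OF KN cK])
    show "Qm N K * Qm N K = 1\<^sub>m N" by (rule Qm_sq[OF KN cK])
    show "adj_matrix V (swE C E) = Qm N K * adj_matrix V E * Qm N K" by (simp add: A B conj)
  qed
  show ?thesis using char_poly_similar[OF sim] by simp
qed




definition dset :: "nat \<Rightarrow> nat list \<Rightarrow> nat list \<Rightarrow> nat set" where
  "dset m x y = {i. i < m \<and> x!i \<noteq> y!i}"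

lemma dset_fin[simp]: "finite (dset m x y)"
  by (rule finite_subset[of _ "{..<m}"]) (auto simp: dset_def)

lemma dset_sym: "dset m x y = dset m y x" by (auto simp: dset_def)

lemma SR_adj_dset: "SR_adj m n x y \<longleftrightarrow> x \<in> SR_verts m n \<and> y \<in> SR_verts m n \<and> card (dset m x y) = 2"
  by (simp add: SR_adj_def dset_def)

lemma SR_adj_sym: "SR_adj m n x y \<Longrightarrow> SR_adj m n y x"
  by (simp add: SR_adj_dset dset_sym)

lemma SR_adj_irrefl: "\<not> SR_adj m n x x"
  by (simp add: SR_adj_dset dset_def)

lemma sum_part:
  assumes x: "x \<in> SR_verts m n" and y: "y \<in> SR_verts m n" and S: "S \<subseteq> {..<m}" and D: "dset m x y \<subseteq> S"
  shows "(\<Sum>k\<in>S. x!k) = (\<Sum>k\<in>S. y!k)"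
proof -
  have lx: "length x = m" and ly: "length y = m" and sx: "sum_list x = n" and sy: "sum_list y = n"
    using x y by (auto simp: SR_verts_def)
  have fin: "finite S" using S finite_subset by blast
  have eq: "(\<Sum>k\<in>{..<m} - S. x!k) = (\<Sum>k\<in>{..<m} - S. y!k)"
    using D by (intro sum.cong) (auto simp: dset_def)
  have "sum_list x = (\<Sum>k\<in>{..<m}. x!k)" using lx by (simp add: sum_list_sum_nth lessThan_atLeast0)
  also have "\<dots> = (\<Sum>k\<in>S. x!k) + (\<Sum>k\<in>{..<m} - S. x!k)"
    using S by (simp add: sum.subset_diff[of S "{..<m}"] add.commute)
  finally have 1: "n = (\<Sum>k\<in>S. x!k) + (\<Sum>k\<in>{..<m} - S. x!k)" using sx by simp
  have "sum_list y = (\<Sum>k\<in>{..<m}. y!k)" using ly by (simp add: sum_list_sum_nth lessThan_atLeast0)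
  also have "\<dots> = (\<Sum>k\<in>S. y!k) + (\<Sum>k\<in>{..<m} - S. y!k)"
    using S by (simp add: sum.subset_diff[of S "{..<m}"] add.commute)
  finally have 2: "n = (\<Sum>k\<in>S. y!k) + (\<Sum>k\<in>{..<m} - S. y!k)" using sy by simp
  show ?thesis using 1 2 eq by simp
qed

lemma sum_two:
  assumes "x \<in> SR_verts m n" "y \<in> SR_verts m n" "i < m" "j < m" "i \<noteq> j" "dset m x y \<subseteq> {i,j}"
  shows "x!i + x!j = y!i + y!j"
  using sum_part[OF assms(1,2), of "{i,j}"] assms(3-6) by simp

lemma eq_of_dset_empty:
  assumes "x \<in> SR_verts m n" "y \<in> SR_verts m n" "dset m x y = {}"
  shows "x = y"
  using assms by (intro nth_equalityI) (auto simp: SR_verts_def dset_def)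

lemma card2_eq: "card A = 2 \<Longrightarrow> a \<in> A \<Longrightarrow> b \<in> A \<Longrightarrow> a \<noteq> b \<Longrightarrow> A = {a,b}"
  unfolding card_2_iff by auto

lemma card2_other: "card A = 2 \<Longrightarrow> a \<in> A \<Longrightarrow> \<exists>b. b \<noteq> a \<and> A = {a,b}"
  unfolding card_2_iff by auto

lemma card2_not_sub1: "card A = 2 \<Longrightarrow> A \<subseteq> {a} \<Longrightarrow> False"
proof -
  assume "card A = 2" "A \<subseteq> {a}"
  then have "card A \<le> card {a}" by (intro card_mono) auto
  then show False using \<open>card A = 2\<close> by simp
qed

lemma card_ge3: "finite A \<Longrightarrow> a \<in> A \<Longrightarrow> b \<in> A \<Longrightarrow> c \<in> A \<Longrightarrow> a \<noteq> b \<Longrightarrow> a \<noteq> c \<Longrightarrow> b \<noteq> c \<Longrightarrow> card A \<noteq> 2"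
proof -
  assume "finite A" "a \<in> A" "b \<in> A" "c \<in> A" "a \<noteq> b" "a \<noteq> c" "b \<noteq> c"
  then have "card {a,b,c} \<le> card A" by (intro card_mono) auto
  moreover have "card {a,b,c} = 3" using \<open>a \<noteq> b\<close> \<open>a \<noteq> c\<close> \<open>b \<noteq> c\<close> by simp
  ultimately show ?thesis by simp
qed

locale sredge =
  fixes m n :: nat and x y :: "nat list" and i j :: nat
  assumes xV: "x \<in> SR_verts m n" and yV: "y \<in> SR_verts m n"
    and Dxy: "dset m x y = {i,j}" and ij: "i \<noteq> j"
begin

lemma im: "i < m" and jm: "j < m" and xyi: "x!i \<noteq> y!i" and xyj: "x!j \<noteq> y!j"
  using Dxy by (auto simp: dset_def set_eq_iff)

lemma outside: "k < m \<Longrightarrow> k \<noteq> i \<Longrightarrow> k \<noteq> j \<Longrightarrow> x!k = y!k"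
  using Dxy by (auto simp: dset_def set_eq_iff)

lemma Z1:
  assumes zV: "z \<in> SR_verts m n" and A: "card (dset m x z) = 2" and B: "card (dset m y z) = 2"
    and zi1: "z!i \<noteq> x!i" and zi2: "z!i \<noteq> y!i"
  shows "dset m x z = {i,j}"
proof -
  have iA: "i \<in> dset m x z" using zi1 im by (auto simp: dset_def)
  have iB: "i \<in> dset m y z" using zi2 im by (auto simp: dset_def)
  have jA: "j \<in> dset m x z"
  proof (rule ccontr)
    assume jA: "j \<notin> dset m x z"
    then have "z!j = x!j" using jm by (auto simp: dset_def)
    then have "j \<in> dset m y z" using xyj jm by (auto simp: dset_def)
    then have Beq: "dset m y z = {i,j}" using card2_eq[OF B iB] ij by simp
    obtain k where k: "k \<noteq> i" "dset m x z = {i,k}" using card2_other[OF A iA] by auto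
    have "k \<in> dset m x z" using k by simp
    then have km: "k < m" and zk: "x!k \<noteq> z!k" by (auto simp: dset_def)
    have "k \<noteq> j" using jA k by auto
    then have "y!k \<noteq> z!k" using outside[OF km k(1)] zk by simp
    then have "k \<in> dset m y z" using km by (simp add: dset_def)
    then show False using Beq k(1) \<open>k \<noteq> j\<close> by simp
  qed
  show ?thesis using card2_eq[OF A iA jA ij] .
qed

lemma Z2:
  assumes zV: "z \<in> SR_verts m n" and A: "card (dset m x z) = 2" and B: "card (dset m y z) = 2"
    and zi: "z!i = y!i"
  shows "z!j = x!j \<and> (\<exists>k. k < m \<and> k \<noteq> i \<and> k \<noteq> j \<and> dset m x z = {i,k} \<and> dset m y z = {j,k})"
proof -
  have iA: "i \<in> dset m x z" using zi xyi im by (auto simp: dset_def)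
  have iB: "i \<notin> dset m y z" using zi by (auto simp: dset_def)
  have zj: "z!j = x!j"
  proof (rule ccontr)
    assume "z!j \<noteq> x!j"
    then have "j \<in> dset m x z" using jm by (auto simp: dset_def)
    then have Aeq: "dset m x z = {i,j}" using card2_eq[OF A iA] ij by simp
    have "dset m y z \<subseteq> {j}"
    proof
      fix k assume k: "k \<in> dset m y z"
      then have km: "k < m" and "y!k \<noteq> z!k" by (auto simp: dset_def)
      show "k \<in> {j}"
      proof (rule ccontr)
        assume "k \<notin> {j}"
        moreover have "k \<noteq> i" using k iB by auto
        ultimately have "x!k = z!k" using Aeq km by (auto simp: dset_def set_eq_iff)
        then show False using outside[OF km \<open>k \<noteq> i\<close>] \<open>k \<notin> {j}\<close> \<open>y!k \<noteq> z!k\<close> by simp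
      qed
    qed
    then show False using card2_not_sub1[OF B] by blast
  qed
  obtain k where k: "k \<noteq> i" "dset m x z = {i,k}" using card2_other[OF A iA] by auto
  have "k \<in> dset m x z" using k by simp
  then have km: "k < m" and zk: "x!k \<noteq> z!k" by (auto simp: dset_def)
  have kj: "k \<noteq> j" using zk zj by auto
  have jB: "j \<in> dset m y z" using zj xyj jm by (auto simp: dset_def)
  have kB: "k \<in> dset m y z" using outside[OF km k(1) kj] zk km by (auto simp: dset_def)
  have "dset m y z = {j,k}" using card2_eq[OF B jB kB] kj by simp
  then show ?thesis using zj km k kj by blast
qed


lemma Dyx: "dset m y x = {i,j}" using Dxy dset_sym by metis

lemma Z3:
  assumes zV: "z \<in> SR_verts m n" and A: "card (dset m x z) = 2" and B: "card (dset m y z) = 2"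
    and zi: "z!i = x!i"
  shows "z!j = y!j \<and> (\<exists>k. k < m \<and> k \<noteq> i \<and> k \<noteq> j \<and> dset m y z = {i,k} \<and> dset m x z = {j,k})"
  using sredge.Z2[OF sredge.intro[OF yV xV Dyx ij] zV B A zi] .

lemma Z1': 
  assumes zV: "z \<in> SR_verts m n" and A: "card (dset m x z) = 2" and B: "card (dset m y z) = 2"
    and zi1: "z!i \<noteq> x!i" and zi2: "z!i \<noteq> y!i"
  shows "dset m y z = {i,j}"
  using sredge.Z1[OF sredge.intro[OF yV xV Dyx ij] zV B A zi2 zi1] .

definition cls :: "nat list \<Rightarrow> nat" where
  "cls z = (if z!i = y!i then 1 else if z!i = x!i then 2 else 0)"

definition cn :: "nat list \<Rightarrow> bool" where
  "cn z \<longleftrightarrow> z \<in> SR_verts m n \<and> card (dset m x z) = 2 \<and> card (dset m y z) = 2"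

lemma same0:
  assumes z: "cn z" and z': "cn z'" and ne: "z \<noteq> z'"
    and c1: "z!i \<noteq> x!i" "z!i \<noteq> y!i" and c2: "z'!i \<noteq> x!i" "z'!i \<noteq> y!i"
  shows "card (dset m z z') = 2"
proof -
  have zV: "z \<in> SR_verts m n" and z'V: "z' \<in> SR_verts m n" using z z' by (auto simp: cn_def)
  have A: "dset m x z = {i,j}" using Z1 z c1 by (auto simp: cn_def)
  have A': "dset m x z' = {i,j}" using Z1 z' c2 by (auto simp: cn_def)
  have s1: "x!i + x!j = z!i + z!j" using sum_two[OF xV zV im jm ij] A by simp
  have s2: "x!i + x!j = z'!i + z'!j" using sum_two[OF xV z'V im jm ij] A' by simp
  have sub: "dset m z z' \<subseteq> {i,j}"
  proof
    fix k assume k: "k \<in> dset m z z'"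
    show "k \<in> {i,j}"
    proof (rule ccontr)
      assume "k \<notin> {i,j}"
      then have "x!k = z!k" "x!k = z'!k" using A A' k by (auto simp: dset_def set_eq_iff)
      then show False using k by (auto simp: dset_def)
    qed
  qed
  have iin: "i \<in> dset m z z'"
  proof (rule ccontr)
    assume "i \<notin> dset m z z'"
    then have "z!i = z'!i" using im by (auto simp: dset_def)
    then have "z!j = z'!j" using s1 s2 by simp
    then have "dset m z z' = {}" using sub \<open>z!i = z'!i\<close> by (auto simp: dset_def)
    then show False using eq_of_dset_empty[OF zV z'V] ne by simp
  qed
  have jin: "j \<in> dset m z z'"
  proof (rule ccontr)
    assume "j \<notin> dset m z z'"
    then have "z!j = z'!j" using jm by (auto simp: dset_def)
    then have "z!i = z'!i" using s1 s2 by simp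
    then have "dset m z z' = {}" using sub \<open>z!j = z'!j\<close> by (auto simp: dset_def)
    then show False using eq_of_dset_empty[OF zV z'V] ne by simp
  qed
  have "dset m z z' = {i,j}" using sub iin jin by auto
  then show ?thesis using ij by simp
qed

lemma same1_gen:
  assumes zV: "z \<in> SR_verts m n" and z'V: "z' \<in> SR_verts m n" and ne: "z \<noteq> z'"
    and zi: "z!i = y!i" and zj: "z!j = x!j" and km: "k < m" and ki: "k \<noteq> i" and kj: "k \<noteq> j"
    and A: "dset m x z = {i,k}"
    and z'i: "z'!i = y!i" and z'j: "z'!j = x!j" and km': "k' < m" and ki': "k' \<noteq> i" and kj': "k' \<noteq> j"
    and A': "dset m x z' = {i,k'}"
  shows "card (dset m z z') = 2"
proof -
  have out: "z!l = z'!l" if "l < m" "l \<noteq> k" "l \<noteq> k'" for l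
  proof -
    consider "l = i" | "l = j" | "l \<noteq> i" "l \<noteq> j" by blast
    then show ?thesis
    proof cases
      case 1 then show ?thesis using zi z'i by simp
    next
      case 2 then show ?thesis using zj z'j by simp
    next
      case 3
      then have "x!l = z!l" "x!l = z'!l" using A A' that by (auto simp: dset_def set_eq_iff)
      then show ?thesis by simp
    qed
  qed
  have kk: "k \<noteq> k'"
  proof
    assume "k = k'"
    then have "dset m z z' \<subseteq> {k}" using out by (auto simp: dset_def)
    then have "(\<Sum>l\<in>{k}. z!l) = (\<Sum>l\<in>{k}. z'!l)" using sum_part[OF zV z'V, of "{k}"] km by auto
    then have "z!k = z'!k" by simp
    then have "dset m z z' = {}" using out \<open>k = k'\<close> by (auto simp: dset_def)
    then show False using eq_of_dset_empty[OF zV z'V] ne by simp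
  qed
  have "k \<in> dset m x z" "k \<notin> dset m x z'" "k' \<in> dset m x z'" "k' \<notin> dset m x z"
    using A A' kk ki ki' by auto
  then have "z!k \<noteq> z'!k" "z!k' \<noteq> z'!k'" by (auto simp: dset_def)
  then have "dset m z z' = {k,k'}" using out km km' by (auto simp: dset_def)
  then show ?thesis using kk by simp
qed

lemma mixed:
  assumes z: "cn z" and z': "cn z'" and c: "cls z \<noteq> cls z'"
  shows "card (dset m z z') \<noteq> 2"
proof -
  have zV: "z \<in> SR_verts m n" and z'V: "z' \<in> SR_verts m n" using z z' by (auto simp: cn_def)
  have Az: "card (dset m x z) = 2" "card (dset m y z) = 2" using z by (auto simp: cn_def)
  have Az': "card (dset m x z') = 2" "card (dset m y z') = 2" using z' by (auto simp: cn_def)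
  have fin: "finite (dset m z z')" by simp
  have gen: "card (dset m u v) \<noteq> 2" if "a \<in> dset m u v" "b \<in> dset m u v" "c \<in> dset m u v" "a \<noteq> b" "a \<noteq> c" "b \<noteq> c" for a b c u v
    using card_ge3[OF dset_fin that] .
  have in_d: "l \<in> dset m u v" if "l < m" "u!l \<noteq> v!l" for l u v using that by (simp add: dset_def)
  have c0: "dset m x u = {i,j} \<and> dset m y u = {i,j}" if "cn u" "u!i \<noteq> x!i" "u!i \<noteq> y!i" for u
    using Z1 Z1' that by (auto simp: cn_def)
  have c1: "u!j = x!j \<and> (\<exists>k. k < m \<and> k \<noteq> i \<and> k \<noteq> j \<and> dset m x u = {i,k} \<and> dset m y u = {j,k})"
    if "cn u" "u!i = y!i" for u using Z2 that by (auto simp: cn_def)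
  have c2: "u!j = y!j \<and> (\<exists>k. k < m \<and> k \<noteq> i \<and> k \<noteq> j \<and> dset m y u = {i,k} \<and> dset m x u = {j,k})"
    if "cn u" "u!i = x!i" for u using Z3 that by (auto simp: cn_def)
  have case01: "card (dset m u v) \<noteq> 2" if u: "cn u" "u!i \<noteq> x!i" "u!i \<noteq> y!i" and v: "cn v" "v!i = y!i" for u v
  proof -
    obtain k where k: "k < m" "k \<noteq> i" "k \<noteq> j" "dset m x v = {i,k}" and vj: "v!j = x!j" using c1[OF v] by blast
    have du: "dset m x u = {i,j}" using c0[OF u] by simp
    have "j \<in> dset m x u" using du by simp
    then have "u!j \<noteq> x!j" by (simp add: dset_def)
    have "k \<notin> dset m x u" using du k(2,3) by simp
    then have "u!k = x!k" using k(1) by (simp add: dset_def)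
    have "k \<in> dset m x v" using k(4) by simp
    then have "v!k \<noteq> x!k" by (simp add: dset_def)
    have "u!j \<noteq> v!j" "u!k \<noteq> v!k" using vj \<open>u!j \<noteq> x!j\<close> \<open>u!k = x!k\<close> \<open>v!k \<noteq> x!k\<close> by auto
    moreover have "u!i \<noteq> v!i" using u(3) v(2) by simp
    ultimately have "i \<in> dset m u v" "j \<in> dset m u v" "k \<in> dset m u v"
      using in_d im jm k(1) by auto
    then show ?thesis using gen[of i u v j k] ij k(2,3) by simp
  qed
  have case02: "card (dset m u v) \<noteq> 2" if u: "cn u" "u!i \<noteq> x!i" "u!i \<noteq> y!i" and v: "cn v" "v!i = x!i" for u v
  proof -
    obtain k where k: "k < m" "k \<noteq> i" "k \<noteq> j" "dset m y v = {i,k}" "dset m x v = {j,k}" and vj: "v!j = y!j" using c2[OF v] by blast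
    have du: "dset m x u = {i,j}" "dset m y u = {i,j}" using c0[OF u] by auto
    have "j \<in> dset m y u" using du by simp
    then have "u!j \<noteq> y!j" by (simp add: dset_def)
    have "k \<notin> dset m x u" using du k(2,3) by simp
    then have "u!k = x!k" using k(1) by (simp add: dset_def)
    have "k \<in> dset m x v" using k(5) by simp
    then have "v!k \<noteq> x!k" by (simp add: dset_def)
    have "u!j \<noteq> v!j" "u!k \<noteq> v!k" using vj \<open>u!j \<noteq> y!j\<close> \<open>u!k = x!k\<close> \<open>v!k \<noteq> x!k\<close> by auto
    moreover have "u!i \<noteq> v!i" using u(2) v(2) by simp
    ultimately have "i \<in> dset m u v" "j \<in> dset m u v" "k \<in> dset m u v"
      using in_d im jm k(1) by auto
    then show ?thesis using gen[of i u v j k] ij k(2,3) by simp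
  qed
  have case12: "card (dset m u v) \<noteq> 2" if u: "cn u" "u!i = y!i" and v: "cn v" "v!i = x!i" for u v
  proof -
    obtain k where k: "k < m" "k \<noteq> i" "k \<noteq> j" "dset m x u = {i,k}" "dset m y u = {j,k}" and uj: "u!j = x!j" using c1[OF u] by blast
    obtain k' where k': "k' < m" "k' \<noteq> i" "k' \<noteq> j" "dset m y v = {i,k'}" "dset m x v = {j,k'}" and vj: "v!j = y!j" using c2[OF v] by blast
    have uV: "u \<in> SR_verts m n" and vV: "v \<in> SR_verts m n" using u v by (auto simp: cn_def)
    have ui: "u!i \<noteq> v!i" using u(2) v(2) xyi by simp
    have uj': "u!j \<noteq> v!j" using uj vj xyj by simp
    have "u!k \<noteq> v!k"
    proof (cases "k = k'")
      case True
      have s1: "x!i + x!k = u!i + u!k" using sum_two[OF xV uV im k(1) k(2)[symmetric]] k(4) by simp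
      have s2: "y!i + y!k = v!i + v!k" using sum_two[OF yV vV im k(1) k(2)[symmetric]] k'(4) True by simp
      have "x!k = y!k" using outside[OF k(1-3)] .
      then show ?thesis using s1 s2 u(2) v(2) xyi by auto
    next
      case False
      have "k \<in> dset m x u" using k(4) by simp
      then have "u!k \<noteq> x!k" by (simp add: dset_def)
      have "k \<notin> dset m x v" using k'(5) k(3) False by auto
      then have "v!k = x!k" using k(1) by (simp add: dset_def)
      then show ?thesis using \<open>u!k \<noteq> x!k\<close> by simp
    qed
    then have "i \<in> dset m u v" "j \<in> dset m u v" "k \<in> dset m u v"
      using in_d im jm k(1) ui uj' by auto
    then show ?thesis using gen[of i u v j k] ij k(2,3) by simp
  qed
  show ?thesis
  proof (cases "z!i = y!i")
    case zy: True
    show ?thesis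
    proof (cases "z'!i = x!i")
      case True then show ?thesis using case12[OF z zy z'] by simp
    next
      case False
      then have "z'!i \<noteq> y!i" using c zy by (auto simp: cls_def)
      then show ?thesis using case01[OF z' False _ z zy] dset_sym by metis
    qed
  next
    case zy: False
    show ?thesis
    proof (cases "z!i = x!i")
      case zx: True
      show ?thesis
      proof (cases "z'!i = y!i")
        case True then show ?thesis using case12[OF z' True z zx] dset_sym by metis
      next
        case False
        then have "z'!i \<noteq> x!i" using c zy zx by (auto simp: cls_def)
        then show ?thesis using case02[OF z' \<open>z'!i \<noteq> x!i\<close> False z zx] dset_sym by metis
      qed
    next
      case zx: False
      show ?thesis
      proof (cases "z'!i = y!i")
        case True then show ?thesis using case01[OF z zx zy z' True] by simp
      next
        case False
        then have "z'!i = x!i" using c zy zx by (auto simp: cls_def split: if_splits)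
        then show ?thesis using case02[OF z zx zy z'] by simp
      qed
    qed
  qed
qed

lemma same:
  assumes z: "cn z" and z': "cn z'" and ne: "z \<noteq> z'" and c: "cls z = cls z'"
  shows "card (dset m z z') = 2"
proof -
  have zV: "z \<in> SR_verts m n" and z'V: "z' \<in> SR_verts m n" using z z' by (auto simp: cn_def)
  consider "z!i = y!i" "z'!i = y!i" | "z!i = x!i" "z'!i = x!i" | "z!i \<noteq> x!i" "z!i \<noteq> y!i" "z'!i \<noteq> x!i" "z'!i \<noteq> y!i"
    using c xyi by (auto simp: cls_def split: if_splits)
  then show ?thesis
  proof cases
    case 1
    have h: "z!j = x!j \<and> (\<exists>k. k < m \<and> k \<noteq> i \<and> k \<noteq> j \<and> dset m x z = {i,k} \<and> dset m y z = {j,k})"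
      using Z2[of z] z 1(1) by (simp add: cn_def)
    have h': "z'!j = x!j \<and> (\<exists>k. k < m \<and> k \<noteq> i \<and> k \<noteq> j \<and> dset m x z' = {i,k} \<and> dset m y z' = {j,k})"
      using Z2[of z'] z' 1(2) by (simp add: cn_def)
    obtain k where k: "k < m" "k \<noteq> i" "k \<noteq> j" "dset m x z = {i,k}" and zj: "z!j = x!j" using h by blast
    obtain k' where k': "k' < m" "k' \<noteq> i" "k' \<noteq> j" "dset m x z' = {i,k'}" and z'j: "z'!j = x!j" using h' by blast
    show ?thesis by (rule same1_gen[OF zV z'V ne 1(1) zj k 1(2) z'j k'])
  next
    case 2
    have S: "sredge m n y x i j" using sredge.intro[OF yV xV Dyx ij] .
    have h: "z!j = y!j \<and> (\<exists>k. k < m \<and> k \<noteq> i \<and> k \<noteq> j \<and> dset m y z = {i,k} \<and> dset m x z = {j,k})"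
      using Z3[of z] z 2(1) by (simp add: cn_def)
    have h': "z'!j = y!j \<and> (\<exists>k. k < m \<and> k \<noteq> i \<and> k \<noteq> j \<and> dset m y z' = {i,k} \<and> dset m x z' = {j,k})"
      using Z3[of z'] z' 2(2) by (simp add: cn_def)
    obtain k where k: "k < m" "k \<noteq> i" "k \<noteq> j" "dset m y z = {i,k}" and zj: "z!j = y!j" using h by blast
    obtain k' where k': "k' < m" "k' \<noteq> i" "k' \<noteq> j" "dset m y z' = {i,k'}" and z'j: "z'!j = y!j" using h' by blast
    show ?thesis by (rule sredge.same1_gen[OF S zV z'V ne 2(1) zj k 2(2) z'j k'])
  next
    case 3
    then show ?thesis using same0[OF z z' ne] by simp
  qed
qed

end


lemma cls_le: "sredge m n x y i j \<Longrightarrow> sredge.cls x y i z \<le> 2"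
  by (simp add: sredge.cls_def)

lemma sr_edge_setup:
  assumes "SR_adj m n x y"
  obtains i j where "sredge m n x y i j"
proof -
  obtain i j where "dset m x y = {i,j}" "i \<noteq> j"
    using assms by (auto simp: SR_adj_dset card_2_iff)
  then show ?thesis using that assms by (auto simp: SR_adj_dset intro!: sredge.intro)
qed

lemma sr_cn: assumes "sredge m n x y i j" "SR_adj m n x z" "SR_adj m n y z"
  shows "sredge.cn m n x y z"
  using assms by (simp add: sredge.cn_def[OF assms(1)] SR_adj_dset)

lemma sr_adj_iff_cls:
  assumes S: "sredge m n x y i j" and "SR_adj m n x z" "SR_adj m n y z" "SR_adj m n x z'" "SR_adj m n y z'" "z \<noteq> z'"
  shows "SR_adj m n z z' \<longleftrightarrow> sredge.cls x y i z = sredge.cls x y i z'"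
proof -
  have c: "sredge.cn m n x y z" "sredge.cn m n x y z'" using sr_cn[OF S] assms by auto
  have V: "z \<in> SR_verts m n" "z' \<in> SR_verts m n" using assms by (auto simp: SR_adj_dset)
  show ?thesis
    using sredge.same[OF S c \<open>z \<noteq> z'\<close>] sredge.mixed[OF S c] V by (auto simp: SR_adj_dset)
qed

lemma sr_no_P3:
  assumes "SR_adj m n x y"
    and "SR_adj m n x a" "SR_adj m n y a" "SR_adj m n x b" "SR_adj m n y b" "SR_adj m n x c" "SR_adj m n y c"
    and "a \<noteq> c" "SR_adj m n a b" "SR_adj m n b c" "\<not> SR_adj m n a c"
  shows False
proof -
  obtain i j where S: "sredge m n x y i j" using sr_edge_setup[OF assms(1)] by blast
  have "a \<noteq> b" "b \<noteq> c" using assms(9,10) SR_adj_irrefl by metis+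
  have "sredge.cls x y i a = sredge.cls x y i b" using sr_adj_iff_cls[OF S assms(2-5) \<open>a \<noteq> b\<close>] assms(9) by simp
  moreover have "sredge.cls x y i b = sredge.cls x y i c" using sr_adj_iff_cls[OF S assms(4-7) \<open>b \<noteq> c\<close>] assms(10) by simp
  ultimately show False using sr_adj_iff_cls[OF S assms(2,3,6,7,8)] assms(11) by simp
qed

lemma sr_no_I4:
  assumes "SR_adj m n x y"
    and "SR_adj m n x a" "SR_adj m n y a" "SR_adj m n x b" "SR_adj m n y b" "SR_adj m n x c" "SR_adj m n y c"
    "SR_adj m n x d" "SR_adj m n y d"
    and "a \<noteq> b" "a \<noteq> c" "a \<noteq> d" "b \<noteq> c" "b \<noteq> d" "c \<noteq> d"
    and "\<not> SR_adj m n a b" "\<not> SR_adj m n a c" "\<not> SR_adj m n a d" "\<not> SR_adj m n b c" "\<not> SR_adj m n b d" "\<not> SR_adj m n c d"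
  shows False
proof -
  obtain i j where S: "sredge m n x y i j" using sr_edge_setup[OF assms(1)] by blast
  let ?c = "sredge.cls x y i"
  have "?c a \<noteq> ?c b" using sr_adj_iff_cls[OF S assms(2-5) assms(10)] assms(16) by simp
  moreover have "?c a \<noteq> ?c c" using sr_adj_iff_cls[OF S assms(2,3,6,7) assms(11)] assms(17) by simp
  moreover have "?c a \<noteq> ?c d" using sr_adj_iff_cls[OF S assms(2,3,8,9) assms(12)] assms(18) by simp
  moreover have "?c b \<noteq> ?c c" using sr_adj_iff_cls[OF S assms(4-7) assms(13)] assms(19) by simp
  moreover have "?c b \<noteq> ?c d" using sr_adj_iff_cls[OF S assms(4,5,8,9) assms(14)] assms(20) by simp
  moreover have "?c c \<noteq> ?c d" using sr_adj_iff_cls[OF S assms(6-9) assms(15)] assms(21) by simp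
  moreover have "?c a \<le> 2" "?c b \<le> 2" "?c c \<le> 2" "?c d \<le> 2" using cls_le[OF S] by auto
  ultimately show False by linarith
qed




fun ndiff :: "nat list \<Rightarrow> nat list \<Rightarrow> nat" where
  "ndiff (a#xs) (b#ys) = (if a = b then 0 else 1) + ndiff xs ys"
| "ndiff _ _ = 0"

lemma dset_Cons: "dset (Suc m) (a#xs) (b#ys) = (if a = b then {} else {0}) \<union> Suc ` dset m xs ys"
  by (auto simp: dset_def nth_Cons' image_iff split: if_splits) (metis Suc_less_eq Suc_pred gr0I nth_Cons_pos)+

lemma card_dset_ndiff: "length xs = length ys \<Longrightarrow> card (dset (length xs) xs ys) = ndiff xs ys"
proof (induction xs ys rule: list_induct2)
  case Nil then show ?case by (simp add: dset_def)
  case (Cons a xs b ys)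
  have "card (Suc ` dset (length xs) xs ys) = card (dset (length xs) xs ys)"
    by (rule card_image) simp
  moreover have "0 \<notin> Suc ` dset (length xs) xs ys" by auto
  ultimately show ?case using Cons by (simp add: dset_Cons)
qed

lemma SR_adj_ndiff: "SR_adj m n x y \<longleftrightarrow> length x = m \<and> sum_list x = n \<and> length y = m \<and> sum_list y = n \<and> ndiff x y = 2"
  using card_dset_ndiff[of x y] by (auto simp: SR_adj_dset SR_verts_def)

lemma ndiff_append: "length xs = length ys \<Longrightarrow> ndiff (xs @ zs) (ys @ zs) = ndiff xs ys"
proof (induction xs ys rule: list_induct2)
  case Nil
  have "ndiff zs zs = 0" by (induction zs) auto
  then show ?case by simp
next
  case (Cons a xs b ys) then show ?case by simp
qed

lemma card_filter4:
  assumes "distinct [c1,c2,c3,c4]"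
  shows "card {c\<in>{c1,c2,c3,c4}. P c} = (if P c1 then 1 else 0) + (if P c2 then 1 else 0) + (if P c3 then 1 else 0) + (if P c4 then 1 else (0::nat))"
proof -
  have e: "{c\<in>{c1,c2,c3,c4}. P c} = (if P c1 then {c1} else {}) \<union> (if P c2 then {c2} else {}) \<union> (if P c3 then {c3} else {}) \<union> (if P c4 then {c4} else {})"
    by auto
  show ?thesis unfolding e using assms by (auto simp: card_insert_if)
qed

lemma not_DS_switch:
  fixes V :: "'a::linorder set"
  assumes fV: "finite V" and supp: "\<And>x y. E x y \<Longrightarrow> x \<in> V \<and> y \<in> V"
    and sym: "\<And>x y. E x y \<Longrightarrow> E y x" and irr: "\<And>x. \<not> E x x"
    and CV: "C \<subseteq> V" and cC: "card C = 4"
    and reg: "\<And>c. c \<in> C \<Longrightarrow> cnt C E c = r"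
    and out: "\<And>v. v \<in> V \<Longrightarrow> v \<notin> C \<Longrightarrow> cnt C E v = 0 \<or> cnt C E v = 2 \<or> cnt C E v = 4"
    and noiso: "\<And>g. bij_betw g V V \<Longrightarrow> (\<forall>x\<in>V. \<forall>y\<in>V. E x y \<longleftrightarrow> swE C E (g x) (g y)) \<Longrightarrow> False"
  shows "\<not> DS V E"
proof
  assume DS: "DS V E"
  define vs where "vs = sorted_list_of_set V"
  define N where "N = length vs"
  have dist: "distinct vs" and setvs: "set vs = V" using fV by (auto simp: vs_def)
  define F where "F i j = (i < N \<and> j < N \<and> swE C E (vs!i) (vs!j))" for i j
  have swsym: "swE C E u v \<Longrightarrow> swE C E v u" for u v
    using sym by (auto simp: swE_def split: if_splits)
  have swirr: "\<not> swE C E u u" for u using irr by (simp add: swE_def)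
  have sg: "simple_graph {0..<N} F"
    unfolding simple_graph_def F_def using swsym swirr by auto
  have "sorted_list_of_set {0..<N} = [0..<N]" by simp
  then have AF: "adj_matrix {0..<N} F = adj_matrix V (swE C E)"
    unfolding adj_matrix_def Let_def vs_def[symmetric] N_def[symmetric]
    by (intro cong_mat) (auto simp: F_def)
  have cosp: "cospectral V E {0..<N} F"
    unfolding cospectral_def AF by (rule gm_graph[OF fV CV cC sym reg out]) auto
  obtain f where f: "bij_betw f V {0..<N}" and pres: "\<forall>x\<in>V. \<forall>y\<in>V. E x y \<longleftrightarrow> F (f x) (f y)"
    using DS sg cosp unfolding DS_def graph_iso_def by blast
  have bvs: "bij_betw (nth vs) {0..<N} V"
  proof (rule bij_betw_imageI)
    show "inj_on (nth vs) {0..<N}" using dist by (simp add: inj_on_nth N_def)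
    show "nth vs ` {0..<N} = V" using setvs by (auto simp: N_def set_conv_nth)
  qed
  have bg: "bij_betw (\<lambda>x. vs ! (f x)) V V"
    using bij_betw_trans[OF f bvs] by (simp add: comp_def)
  have "\<forall>x\<in>V. \<forall>y\<in>V. E x y \<longleftrightarrow> swE C E (vs ! (f x)) (vs ! (f y))"
    using pres f by (auto simp: F_def bij_betw_def)
  then show False using noiso[OF bg] by blast
qed


lemma fin_SR: "finite (SR_verts m n)"
proof (rule finite_subset)
  show "SR_verts m n \<subseteq> {xs. set xs \<subseteq> {..n} \<and> length xs = m}"
    by (auto simp: SR_verts_def member_le_sum_list)
  show "finite {xs. set xs \<subseteq> {..n} \<and> length xs = m}"
    by (rule finite_lists_length_eq) simp
qed

lemma preimg: "bij_betw g V V \<Longrightarrow> w \<in> V \<Longrightarrow> \<exists>u\<in>V. g u = w"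
  by (metis bij_betw_def imageE)

lemma noiso_I4:
  assumes bg: "bij_betw g (SR_verts m n) (SR_verts m n)"
    and pres: "\<forall>x\<in>SR_verts m n. \<forall>y\<in>SR_verts m n. SR_adj m n x y \<longleftrightarrow> E' (g x) (g y)"
    and V: "x \<in> SR_verts m n" "y \<in> SR_verts m n" "a \<in> SR_verts m n" "b \<in> SR_verts m n" "c \<in> SR_verts m n" "d \<in> SR_verts m n"
    and e: "E' x y" "E' x a" "E' y a" "E' x b" "E' y b" "E' x c" "E' y c" "E' x d" "E' y d"
    and ne: "a \<noteq> b" "a \<noteq> c" "a \<noteq> d" "b \<noteq> c" "b \<noteq> d" "c \<noteq> d"
    and ni: "\<not> E' a b" "\<not> E' a c" "\<not> E' a d" "\<not> E' b c" "\<not> E' b d" "\<not> E' c d"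
  shows False
proof -
  obtain x' where x': "x' \<in> SR_verts m n" "g x' = x" using preimg[OF bg V(1)] by blast
  obtain y' where y': "y' \<in> SR_verts m n" "g y' = y" using preimg[OF bg V(2)] by blast
  obtain a' where a': "a' \<in> SR_verts m n" "g a' = a" using preimg[OF bg V(3)] by blast
  obtain b' where b': "b' \<in> SR_verts m n" "g b' = b" using preimg[OF bg V(4)] by blast
  obtain c' where c': "c' \<in> SR_verts m n" "g c' = c" using preimg[OF bg V(5)] by blast
  obtain d' where d': "d' \<in> SR_verts m n" "g d' = d" using preimg[OF bg V(6)] by blast
  show False
    apply (rule sr_no_I4[of m n x' y' a' b' c' d'])
    using pres x' y' a' b' c' d' e ne ni by metis+
qed

lemma noiso_P3:
  assumes bg: "bij_betw g (SR_verts m n) (SR_verts m n)"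
    and pres: "\<forall>x\<in>SR_verts m n. \<forall>y\<in>SR_verts m n. SR_adj m n x y \<longleftrightarrow> E' (g x) (g y)"
    and V: "x \<in> SR_verts m n" "y \<in> SR_verts m n" "a \<in> SR_verts m n" "b \<in> SR_verts m n" "c \<in> SR_verts m n"
    and e: "E' x y" "E' x a" "E' y a" "E' x b" "E' y b" "E' x c" "E' y c"
    and ne: "a \<noteq> c" and e2: "E' a b" "E' b c" "\<not> E' a c"
  shows False
proof -
  obtain x' where x': "x' \<in> SR_verts m n" "g x' = x" using preimg[OF bg V(1)] by blast
  obtain y' where y': "y' \<in> SR_verts m n" "g y' = y" using preimg[OF bg V(2)] by blast
  obtain a' where a': "a' \<in> SR_verts m n" "g a' = a" using preimg[OF bg V(3)] by blast
  obtain b' where b': "b' \<in> SR_verts m n" "g b' = b" using preimg[OF bg V(4)] by blast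
  obtain c' where c': "c' \<in> SR_verts m n" "g c' = c" using preimg[OF bg V(5)] by blast
  show False
    apply (rule sr_no_P3[of m n x' y' a' b' c'])
    using pres x' y' a' b' c' e ne e2 by metis+
qed

lemma len4: "length v = 4 \<Longrightarrow> \<exists>a b c d. v = [a,b,c,d]"
  by (simp add: length_Suc_conv numeral_eq_Suc) blast




definition CB :: "nat list set" where
  "CB = {[0,1,1,2],[0,1,2,1],[0,2,1,1],[1,1,1,1]}"

lemma CB_cnt: "cnt CB (SR_adj 4 4) v = (if SR_adj 4 4 v [0,1,1,2] then 1 else 0) + (if SR_adj 4 4 v [0,1,2,1] then 1 else 0)
   + (if SR_adj 4 4 v [0,2,1,1] then 1 else 0) + (if SR_adj 4 4 v [1,1,1,1] then 1 else 0)"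
  unfolding cnt_def CB_def by (rule card_filter4) simp

lemma famB: "\<not> DS (SR_verts 4 4) (SR_adj 4 4)"
proof (rule not_DS_switch[where C = CB and r = 3])
  show "finite (SR_verts 4 4)" by (rule fin_SR)
  show "\<And>x y. SR_adj 4 4 x y \<Longrightarrow> x \<in> SR_verts 4 4 \<and> y \<in> SR_verts 4 4" by (simp add: SR_adj_def)
  show "\<And>x y. SR_adj 4 4 x y \<Longrightarrow> SR_adj 4 4 y x" by (rule SR_adj_sym)
  show "\<And>x. \<not> SR_adj 4 4 x x" by (rule SR_adj_irrefl)
  show "CB \<subseteq> SR_verts 4 4" by (simp add: CB_def SR_verts_def)
  show "card CB = 4" by (simp add: CB_def)
  show "\<And>c. c \<in> CB \<Longrightarrow> cnt CB (SR_adj 4 4) c = 3"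
    apply (subst CB_cnt)
    apply (auto simp: CB_def SR_adj_ndiff)
    done
  show "cnt CB (SR_adj 4 4) v = 0 \<or> cnt CB (SR_adj 4 4) v = 2 \<or> cnt CB (SR_adj 4 4) v = 4"
    if v: "v \<in> SR_verts 4 4" "v \<notin> CB" for v
  proof -
    obtain a b c d where abcd: "v = [a,b,c,d]" using len4[of v] v by (auto simp: SR_verts_def)
    have s: "a + b + c + d = 4" using v abcd by (simp add: SR_verts_def)
    then have dd: "d = 4 - a - b - c" and le: "a + b + c \<le> 4" by auto
    have A: "a = 0 \<or> a = 1 \<or> a = 2 \<or> a = 3 \<or> a = 4" using le by arith
    have B: "b = 0 \<or> b = 1 \<or> b = 2 \<or> b = 3 \<or> b = 4" using le by arith
    have C: "c = 0 \<or> c = 1 \<or> c = 2 \<or> c = 3 \<or> c = 4" using le by arith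
    show ?thesis using A B C le v(2) unfolding abcd dd CB_cnt
      by (elim disjE; simp add: SR_adj_ndiff CB_def)
  qed
  show "False" if bg: "bij_betw g (SR_verts 4 4) (SR_verts 4 4)"
    and pres: "\<forall>x\<in>SR_verts 4 4. \<forall>y\<in>SR_verts 4 4. SR_adj 4 4 x y \<longleftrightarrow> swE CB (SR_adj 4 4) (g x) (g y)" for g
    apply (rule noiso_I4[OF bg pres, of "[0,0,1,3]" "[1,0,1,2]" "[0,0,2,2]" "[0,1,2,1]" "[1,0,0,3]" "[3,0,1,0]"])
    unfolding swE_def CB_cnt by (simp_all add: SR_verts_def SR_adj_ndiff CB_def)
qed




definition CA :: "nat \<Rightarrow> nat list set" where
  "CA n = {[n,0,0,0],[0,n,0,0],[0,0,n,0],[0,0,0,n]}"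

lemma CA_cnt: "n > 0 \<Longrightarrow> cnt (CA n) (SR_adj 4 n) v = (if SR_adj 4 n v [n,0,0,0] then 1 else 0) + (if SR_adj 4 n v [0,n,0,0] then 1 else 0)
   + (if SR_adj 4 n v [0,0,n,0] then 1 else 0) + (if SR_adj 4 n v [0,0,0,n] then 1 else 0)"
  unfolding cnt_def CA_def by (rule card_filter4) simp

lemma famA: assumes n: "n \<ge> 5" shows "\<not> DS (SR_verts 4 n) (SR_adj 4 n)"
proof (rule not_DS_switch[where C = "CA n" and r = 3])
  have n0: "n > 0" using n by simp
  show "finite (SR_verts 4 n)" by (rule fin_SR)
  show "\<And>x y. SR_adj 4 n x y \<Longrightarrow> x \<in> SR_verts 4 n \<and> y \<in> SR_verts 4 n" by (simp add: SR_adj_def)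
  show "\<And>x y. SR_adj 4 n x y \<Longrightarrow> SR_adj 4 n y x" by (rule SR_adj_sym)
  show "\<And>x. \<not> SR_adj 4 n x x" by (rule SR_adj_irrefl)
  show "CA n \<subseteq> SR_verts 4 n" by (simp add: CA_def SR_verts_def)
  show "card (CA n) = 4" using n0 by (simp add: CA_def)
  show "\<And>c. c \<in> CA n \<Longrightarrow> cnt (CA n) (SR_adj 4 n) c = 3"
    apply (subst CA_cnt[OF n0])
    using n0 apply (auto simp: CA_def SR_adj_ndiff)
    done
  show "cnt (CA n) (SR_adj 4 n) v = 0 \<or> cnt (CA n) (SR_adj 4 n) v = 2 \<or> cnt (CA n) (SR_adj 4 n) v = 4"
    if v: "v \<in> SR_verts 4 n" "v \<notin> CA n" for v
  proof -
    obtain a b c d where abcd: "v = [a,b,c,d]" using len4[of v] v by (auto simp: SR_verts_def)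
    have s: "a + b + c + d = n" using v abcd by (simp add: SR_verts_def)
    show ?thesis using s v(2) n0 unfolding abcd CA_cnt[OF n0]
      by (cases "a = 0"; cases "b = 0"; cases "c = 0"; cases "d = 0") (auto simp: SR_adj_ndiff CA_def)
  qed
  show "False" if bg: "bij_betw g (SR_verts 4 n) (SR_verts 4 n)"
    and pres: "\<forall>x\<in>SR_verts 4 n. \<forall>y\<in>SR_verts 4 n. SR_adj 4 n x y \<longleftrightarrow> swE (CA n) (SR_adj 4 n) (g x) (g y)" for g
  proof -
    have ar: "n - 2 \<noteq> n - 4" "Suc (Suc (n - 2)) = n" "Suc (Suc (Suc (Suc (n - 4)))) = n" using n by arith+
    show ?thesis
    apply (rule noiso_I4[OF bg pres, of "[0,0,2,n-2]" "[0,2,0,n-2]" "[0,1,1,n-2]" "[0,2,2,n-4]" "[2,0,0,n-2]" "[n,0,0,0]"])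
    unfolding swE_def CA_cnt[OF n0] using n ar by (simp_all add: SR_verts_def SR_adj_ndiff CA_def)
  qed
qed




definition CC :: "nat \<Rightarrow> nat list set" where
  "CC m = {[3,0,0,0] @ replicate (m-4) 0, [2,1,0,0] @ replicate (m-4) 0, [1,2,0,0] @ replicate (m-4) 0, [0,3,0,0] @ replicate (m-4) 0}"

lemma CC_cnt: "cnt (CC m) (SR_adj m 3) v =
     (if SR_adj m 3 v ([3,0,0,0] @ replicate (m-4) 0) then 1 else 0)
   + (if SR_adj m 3 v ([2,1,0,0] @ replicate (m-4) 0) then 1 else 0)
   + (if SR_adj m 3 v ([1,2,0,0] @ replicate (m-4) 0) then 1 else 0)
   + (if SR_adj m 3 v ([0,3,0,0] @ replicate (m-4) 0) then 1 else 0)"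
  unfolding cnt_def CC_def by (rule card_filter4) simp

lemma rep_conv: "m \<ge> 4 \<Longrightarrow> [a,b,0,0] @ replicate (m-4) 0 = a # b # replicate (m-2) (0::nat)"
proof -
  assume "m \<ge> 4"
  then have "m - 2 = Suc (Suc (m - 4))" by arith
  then show ?thesis by simp
qed

lemma ndiff_self[simp]: "ndiff xs xs = 0"
  by (induction xs) auto

lemma sum0_rep: "sum_list rest = (0::nat) \<Longrightarrow> rest = replicate (length rest) 0"
  by (induction rest) auto

lemma ndiff_rep0: "ndiff rest (replicate (length rest) 0) = 0 \<longleftrightarrow> sum_list rest = 0"
  by (induction rest) auto

lemma famC: assumes m: "m \<ge> 4" shows "\<not> DS (SR_verts m 3) (SR_adj m 3)"
proof (rule not_DS_switch[where C = "CC m" and r = 3])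
  have lenz: "length ([a,b,c,d] @ replicate (m-4) (0::nat)) = m" for a b c d using m by simp
  show "finite (SR_verts m 3)" by (rule fin_SR)
  show "\<And>x y. SR_adj m 3 x y \<Longrightarrow> x \<in> SR_verts m 3 \<and> y \<in> SR_verts m 3" by (simp add: SR_adj_def)
  show "\<And>x y. SR_adj m 3 x y \<Longrightarrow> SR_adj m 3 y x" by (rule SR_adj_sym)
  show "\<And>x. \<not> SR_adj m 3 x x" by (rule SR_adj_irrefl)
  show "CC m \<subseteq> SR_verts m 3" using lenz by (simp add: CC_def SR_verts_def)
  show "card (CC m) = 4" by (simp add: CC_def)
  show "\<And>c. c \<in> CC m \<Longrightarrow> cnt (CC m) (SR_adj m 3) c = 3"
    apply (subst CC_cnt)
    using lenz apply (auto simp: CC_def SR_adj_ndiff ndiff_append)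
    done
  show "cnt (CC m) (SR_adj m 3) v = 0 \<or> cnt (CC m) (SR_adj m 3) v = 2 \<or> cnt (CC m) (SR_adj m 3) v = 4"
    if v: "v \<in> SR_verts m 3" "v \<notin> CC m" for v
  proof -
    have lv: "length v = m" and sv: "sum_list v = 3" using v by (auto simp: SR_verts_def)
    obtain p q rest where v_eq: "v = p # q # rest" and lr: "length rest = m - 2"
      using lv m by (cases v; cases "tl v") auto
    have s: "p + q + sum_list rest = 3" using sv v_eq by simp
    define t where "t = ndiff rest (replicate (m-2) 0)"
    have t0: "t = 0 \<longleftrightarrow> sum_list rest = 0" unfolding t_def using ndiff_rep0[of rest] lr by simp
    have "t \<noteq> 0"
    proof
      assume "t = 0"
      then have "sum_list rest = 0" using t0 by simp
      then have "rest = replicate (m-2) 0" using lr sum0_rep[of rest] by simp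
      moreover have "q = 3 - p" "p \<le> 3" using s \<open>sum_list rest = 0\<close> by auto
      moreover have "p = 0 \<or> p = 1 \<or> p = 2 \<or> p = 3" using \<open>p \<le> 3\<close> by arith
      ultimately have "v \<in> CC m" using v_eq unfolding CC_def rep_conv[OF m]
        by (elim disjE) simp_all
      then show False using v(2) by simp
    qed
    then have "sum_list rest \<noteq> 0" using t0 by simp
    then have pq: "p + q \<le> 2" using s by arith
    have nd: "ndiff v ([a,b,0,0] @ replicate (m-4) 0) = (if p = a then 0 else 1) + (if q = b then 0 else 1) + t" for a b
      unfolding rep_conv[OF m] v_eq t_def by simp
    have adj: "SR_adj m 3 v ([a,b,0,0] @ replicate (m-4) 0) \<longleftrightarrow> a + b = 3 \<and> (if p = a then 0 else 1) + (if q = b then 0 else 1) + t = 2" for a b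
      using lv sv lenz nd by (simp add: SR_adj_ndiff sum_list_replicate)
    have P: "p = 0 \<or> p = 1 \<or> p = 2" and Q: "q = 0 \<or> q = 1 \<or> q = 2" using pq by arith+
    have T: "t = 1 \<or> t \<ge> 2" using \<open>t \<noteq> 0\<close> by arith
    show ?thesis unfolding CC_cnt adj using P Q T pq by (elim disjE; simp)
  qed
  show "False" if bg: "bij_betw g (SR_verts m 3) (SR_verts m 3)"
    and pres: "\<forall>x\<in>SR_verts m 3. \<forall>y\<in>SR_verts m 3. SR_adj m 3 x y \<longleftrightarrow> swE (CC m) (SR_adj m 3) (g x) (g y)" for g
    apply (rule noiso_P3[OF bg pres, of "[0,1,0,2] @ replicate (m-4) 0" "[0,2,0,1] @ replicate (m-4) 0"
          "[0,1,1,1] @ replicate (m-4) 0" "[1,1,0,1] @ replicate (m-4) 0" "[3,0,0,0] @ replicate (m-4) 0"])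
    unfolding swE_def CC_cnt using lenz by (simp_all add: SR_verts_def SR_adj_ndiff CC_def ndiff_append)
qed



theorem proposition14:
  fixes m n :: nat
  assumes "(m = 4 \<and> n \<ge> 3) \<or> (n = 3 \<and> m \<ge> 4)"
  shows "\<not> DS (SR_verts m n) (SR_adj m n)"
proof -
  consider "n = 3" "m \<ge> 4" | "m = 4" "n = 4" | "m = 4" "n \<ge> 5" using assms by linarith
  then show ?thesis
  proof cases
    case 1 then show ?thesis using famC[of m] by simp
  next
    case 2 then show ?thesis using famB by simp
  next
    case 3 then show ?thesis using famA[of n] by simp
  qed
qed

end
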